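(* Let $k$ be a positive integer and let $n>\frac{k(k-1)}{2}$. Among the partitions counted by $D_k(n)$, those with an even number of parts exceeding the smallest part are equinumerous with those having an odd number of such parts, i.e. $D_k^e(n)=D_k^o(n)$. Consequently, $D_k(n)$ is even.
   Context: $D_k(n)$ is the number of partitions of $n$ into non-negative parts (the part $0$ is allowed) in which the smallest part appears exactly $k$ times and no other part is repeated. $D_k^e(n)$ (resp. $D_k^o(n)$) is the number of such partitions in which the number of parts greater than the smallest part is even (resp. odd). *)

theory Defs
  imports Main "HOL-Library.Multiset"
begin

text \<open>A partition of n into non-negative parts (0 allowed) is a finite multiset of
naturals with sum n.\<close>

definition D_set :: "nat \<Rightarrow> nat \<Rightarrow> nat multiset set" where
  "D_set k n = {M. M \<noteq> {#} \<and> sum_mset M = n \<and>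
      count M (Min_mset M) = k \<and>
      (\<forall>x \<in># M. x \<noteq> Min_mset M \<longrightarrow> count M x = 1)}"

definition big_parts :: "nat multiset \<Rightarrow> nat" where
  "big_parts M = size (filter_mset (\<lambda>x. x > Min_mset M) M)"

definition D :: "nat \<Rightarrow> nat \<Rightarrow> nat" where
  "D k n = card (D_set k n)"

definition De :: "nat \<Rightarrow> nat \<Rightarrow> nat" where
  "De k n = card {M \<in> D_set k n. even (big_parts M)}"

definition Do :: "nat \<Rightarrow> nat \<Rightarrow> nat" where
  "Do k n = card {M \<in> D_set k n. odd (big_parts M)}"

end

theory Submission
  imports Defs "HOL-Computational_Algebra.Polynomial"
begin

abbreviation qq :: "int poly" where "qq \<equiv> [:0,1:]"

definition PP :: "nat \<Rightarrow> nat \<Rightarrow> int poly" where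
  "PP N m = (\<Prod>j\<in>{m<..N}. 1 - qq ^ j)"

definition FF :: "nat \<Rightarrow> nat \<Rightarrow> int poly" where
  "FF k N = (\<Sum>m\<le>N. qq ^ (k*m) * PP N m)"

lemma qq_pow: "qq ^ j = monom 1 j"
  by (simp add: monom_altdef)

lemma PP_Suc: "m \<le> N \<Longrightarrow> PP (Suc N) m = (1 - qq ^ Suc N) * PP N m"
proof -
  assume "m \<le> N"
  then have "{m<..Suc N} = insert (Suc N) {m<..N}" by auto
  then show ?thesis unfolding PP_def by simp
qed

lemma PP_self: "PP N N = 1" unfolding PP_def by simp

lemma FF_Suc: "FF k (Suc N) = (1 - qq ^ Suc N) * FF k N + qq ^ (k * Suc N)"
proof -
  have "FF k (Suc N) = (\<Sum>m\<le>N. qq ^ (k*m) * PP (Suc N) m) + qq ^ (k * Suc N) * PP (Suc N) (Suc N)"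
    unfolding FF_def by simp
  also have "(\<Sum>m\<le>N. qq ^ (k*m) * PP (Suc N) m) = (1 - qq ^ Suc N) * FF k N"
    unfolding FF_def sum_distrib_left by (rule sum.cong) (auto simp: PP_Suc)
  finally show ?thesis by (simp add: PP_self)
qed

lemma FF_rec: "FF (Suc k) N = (1 - qq ^ k) * FF k N + qq ^ (k * Suc N)"
proof (induction N)
  case 0
  then show ?case by (simp add: FF_def PP_def)
next
  case (Suc N)
  have "FF (Suc k) (Suc N) = (1 - qq ^ Suc N) * ((1 - qq ^ k) * FF k N + qq ^ (k * Suc N)) + qq ^ (Suc k * Suc N)"
    by (simp add: FF_Suc Suc)
  also have "\<dots> = (1 - qq ^ k) * ((1 - qq ^ Suc N) * FF k N + qq ^ (k * Suc N)) + qq ^ (k * Suc (Suc N))"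
    by (simp add: algebra_simps power_add)
  also have "\<dots> = (1 - qq ^ k) * FF k (Suc N) + qq ^ (k * Suc (Suc N))"
    by (simp add: FF_Suc)
  finally show ?case .
qed

lemma coeff_FF_zero:
  assumes "k \<ge> 1" "n \<le> N" "2 * n > k * (k - 1)"
  shows "coeff (FF k N) n = 0"
  using assms
proof (induction k arbitrary: n)
  case 0
  then show ?case by simp
next
  case (Suc k)
  show ?case
  proof (cases "k = 0")
    case True
    then have "FF (Suc k) N = 1" using FF_rec[of 0 N] by simp
    moreover have "n > 0" using Suc.prems True by simp
    ultimately show ?thesis by simp
  next
    case False
    have rec: "FF (Suc k) N = FF k N - qq ^ k * FF k N + qq ^ (k * Suc N)"
      using FF_rec[of k N] by (simp add: algebra_simps)
    have a: "coeff (FF k N) n = 0"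
      using Suc.IH[of n] Suc.prems False by (auto intro: less_le_trans[OF _ mult_le_mono1] simp: algebra_simps)
    have kk: "(Suc k) * (Suc k - 1) = k * (k - 1) + 2 * k" using False by (cases k) (auto simp: algebra_simps)
    have b: "coeff (qq ^ k * FF k N) n = 0"
    proof (cases "n < k")
      case True then show ?thesis by (simp add: qq_pow coeff_monom_mult)
    next
      case nk: False
      have "coeff (FF k N) (n - k) = 0"
        using Suc.IH[of "n - k"] Suc.prems False nk kk by simp
      then show ?thesis by (simp add: qq_pow coeff_monom_mult)
    qed
    have "N < k * Suc N" using False by (cases k) auto
    then have c: "coeff (qq ^ (k * Suc N)) n = 0" using Suc.prems by (simp add: qq_pow)
    show ?thesis unfolding rec using a b c by (simp add: coeff_diff)
  qed
qed

lemma prod_expand: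
  assumes "finite A"
  shows "(\<Prod>j\<in>A. 1 - qq ^ j) = (\<Sum>T\<in>Pow A. (-1) ^ card T * qq ^ (\<Sum>T))"
  using assms
proof (induction A rule: finite_induct)
  case empty
  then show ?case by simp
next
  case (insert x F)
  have "Pow (insert x F) = Pow F \<union> insert x ` Pow F" by (rule Pow_insert)
  moreover have "Pow F \<inter> insert x ` Pow F = {}" using insert by auto
  moreover have "inj_on (insert x) (Pow F)" using insert by (auto simp: inj_on_def) 
  ultimately have "(\<Sum>T\<in>Pow (insert x F). (-1) ^ card T * qq ^ (\<Sum>T)) =
     (\<Sum>T\<in>Pow F. (-1) ^ card T * qq ^ (\<Sum>T)) + (\<Sum>T\<in>Pow F. (-1) ^ card (insert x T) * qq ^ (\<Sum>(insert x T)))"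
    using insert by (simp add: sum.union_disjoint sum.reindex)
  also have "(\<Sum>T\<in>Pow F. (-1) ^ card (insert x T) * qq ^ (\<Sum>(insert x T))) = 
      (- (qq ^ x)) * (\<Sum>T\<in>Pow F. (-1) ^ card T * qq ^ (\<Sum>T))"
    unfolding sum_distrib_left
  proof (rule sum.cong)
    fix T assume "T \<in> Pow F"
    then have "x \<notin> T" "finite T" using insert finite_subset by auto
    then show "(-1) ^ card (insert x T) * qq ^ (\<Sum>(insert x T)) = (- (qq ^ x)) * ((-1) ^ card T * qq ^ (\<Sum>T))"
      by (simp add: power_add)
  qed simp
  finally show ?case using insert by (simp add: algebra_simps)
qed

lemma coeff_helper: "coeff (monom 1 a * ((-1) ^ c * monom 1 b)) n = (if a + b = n then (-1::int) ^ c else 0)"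
proof -
  have "(-1 :: int poly) ^ c = [:(-1) ^ c:]" by (induction c) auto
  then have "monom 1 a * ((-1) ^ c * monom 1 b) = smult ((-1::int) ^ c) (monom 1 (a + b))"
    by (simp add: mult_monom mult.left_commute)
  then show ?thesis by simp
qed

definition Idx :: "nat \<Rightarrow> nat \<Rightarrow> nat \<Rightarrow> (nat \<times> nat set) set" where
  "Idx k N n = {x \<in> Sigma {..N} (\<lambda>m. Pow {m<..N}). k * fst x + \<Sum>(snd x) = n}"

lemma coeff_FF_Idx: "coeff (FF k N) n = (\<Sum>x\<in>Idx k N n. (-1) ^ card (snd x))"
proof -
  have "coeff (FF k N) n = (\<Sum>m\<le>N. \<Sum>T\<in>Pow {m<..N}. (if k * m + \<Sum>T = n then (-1) ^ card T else 0))"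
    unfolding FF_def PP_def coeff_sum
    apply (simp only: prod_expand[OF finite_greaterThanAtMost] sum_distrib_left coeff_sum)
    apply (simp add: qq_pow coeff_helper)
    done
  also have "\<dots> = (\<Sum>x\<in>Sigma {..N} (\<lambda>m. Pow {m<..N}). (if k * fst x + \<Sum>(snd x) = n then (-1) ^ card (snd x) else 0))"
    by (subst sum.Sigma) (auto intro!: sum.cong simp: split_beta)
  also have "\<dots> = (\<Sum>x\<in>Idx k N n. (-1) ^ card (snd x))"
    unfolding Idx_def by (subst sum.inter_filter[symmetric]) (auto simp: finite_SigmaI)
  finally show ?thesis .
qed

definition phi :: "nat \<Rightarrow> nat \<times> nat set \<Rightarrow> nat multiset" where
  "phi k x = replicate_mset k (fst x) + mset_set (snd x)"

lemma phi_props: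
  assumes "k \<ge> 1" "finite T" "\<forall>t\<in>T. m < t"
  shows "set_mset (phi k (m, T)) = insert m T"
    and "Min_mset (phi k (m, T)) = m"
    and "count (phi k (m, T)) m = k"
    and "\<And>x. x \<noteq> m \<Longrightarrow> count (phi k (m, T)) x = (if x \<in> T then 1 else 0)"
    and "sum_mset (phi k (m, T)) = k * m + \<Sum>T"
    and "big_parts (phi k (m, T)) = card T"
proof -
  show s: "set_mset (phi k (m, T)) = insert m T" using assms by (auto simp: phi_def)
  show mn: "Min_mset (phi k (m, T)) = m" unfolding s
    using assms by (intro Min_eqI) (auto simp: less_imp_le)
  show "count (phi k (m, T)) m = k" using assms by (auto simp: phi_def)
  show "\<And>x. x \<noteq> m \<Longrightarrow> count (phi k (m, T)) x = (if x \<in> T then 1 else 0)"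
    using assms by (auto simp: phi_def)
  show "sum_mset (phi k (m, T)) = k * m + \<Sum>T" using assms
    by (simp add: phi_def sum_unfold_sum_mset)
  have r: "filter_mset (\<lambda>x. m < x) (replicate_mset k m) = {#}" by (induction k) auto
  have "{x \<in> T. m < x} = T" using assms by auto
  then have "filter_mset (\<lambda>x. m < x) (phi k (m, T)) = mset_set T"
    using assms r by (simp add: phi_def)
  then show "big_parts (phi k (m, T)) = card T" unfolding big_parts_def mn by simp
qed

lemma bij_phi:
  assumes "k \<ge> 1"
  shows "bij_betw (phi k) (Idx k n n) (D_set k n)"
proof (rule bij_betw_byWitness[where f' = "\<lambda>M. (Min_mset M, set_mset M - {Min_mset M})"])
  show "\<forall>x\<in>Idx k n n. (Min_mset (phi k x), set_mset (phi k x) - {Min_mset (phi k x)}) = x"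
  proof
    fix x assume "x \<in> Idx k n n"
    moreover obtain m T where x0: "x = (m, T)" by (cases x)
    ultimately have sub: "T \<subseteq> {m<..n}" unfolding Idx_def by auto
    then have x: "x = (m, T)" "finite T" "\<forall>t\<in>T. m < t" using x0 finite_subset by auto
    show "(Min_mset (phi k x), set_mset (phi k x) - {Min_mset (phi k x)}) = x"
      using phi_props[OF assms x(2,3)] x by auto
  qed
  show "\<forall>M\<in>D_set k n. phi k (Min_mset M, set_mset M - {Min_mset M}) = M"
  proof
    fix M assume M: "M \<in> D_set k n"
    let ?m = "Min_mset M" let ?T = "set_mset M - {Min_mset M}"
    have ne: "M \<noteq> {#}" and cm: "count M ?m = k" and co: "\<forall>x \<in># M. x \<noteq> ?m \<longrightarrow> count M x = 1"
      using M unfolding D_set_def by auto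
    have gt: "\<forall>t\<in>?T. ?m < t" using ne by (auto simp: order.not_eq_order_implies_strict)
    have fin: "finite ?T" by simp
    show "phi k (?m, ?T) = M"
    proof (rule multiset_eqI)
      fix x show "count (phi k (?m, ?T)) x = count M x"
      proof (cases "x = ?m")
        case True then show ?thesis using phi_props(3)[OF assms fin gt] cm by simp
      next
        case False then show ?thesis using phi_props(4)[OF assms fin gt False] co
          by (auto simp: not_in_iff)
      qed
    qed
  qed
  show "phi k ` Idx k n n \<subseteq> D_set k n"
  proof
    fix M assume "M \<in> phi k ` Idx k n n"
    then obtain m T where x0: "M = phi k (m, T)" "T \<subseteq> {m<..n}" "k * m + \<Sum>T = n"
      unfolding Idx_def by auto
    then have x: "M = phi k (m, T)" "finite T" "\<forall>t\<in>T. m < t" "k * m + \<Sum>T = n"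
      using finite_subset by auto
    show "M \<in> D_set k n" unfolding D_set_def using phi_props[OF assms x(2,3)] x
      by (auto simp: phi_def)
  qed
  show "(\<lambda>M. (Min_mset M, set_mset M - {Min_mset M})) ` D_set k n \<subseteq> Idx k n n"
  proof
    fix y assume "y \<in> (\<lambda>M. (Min_mset M, set_mset M - {Min_mset M})) ` D_set k n"
    then obtain M where y: "y = (Min_mset M, set_mset M - {Min_mset M})" and M: "M \<in> D_set k n" by auto
    let ?m = "Min_mset M" let ?T = "set_mset M - {Min_mset M}"
    have ne: "M \<noteq> {#}" and sm: "sum_mset M = n" using M unfolding D_set_def by auto
    have eq: "phi k (?m, ?T) = M" using \<open>\<forall>M\<in>D_set k n. phi k (Min_mset M, set_mset M - {Min_mset M}) = M\<close> M by blast
    have gt: "\<forall>t\<in>?T. ?m < t" using ne by (auto simp: order.not_eq_order_implies_strict)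
    have fin: "finite ?T" by simp
    have le: "\<And>x. x \<in># M \<Longrightarrow> x \<le> n" using sm by (metis sum_mset.remove le_add1)
    have "?m \<le> n" using le ne by simp
    moreover have "?T \<subseteq> {?m<..n}" using gt le by auto
    moreover have "k * ?m + \<Sum>?T = n" using phi_props(5)[OF assms fin gt] eq sm by simp
    ultimately show "y \<in> Idx k n n" unfolding Idx_def y by auto
  qed
qed

theorem corollary9:
  fixes k n :: nat
  assumes "k \<ge> 1" and "2 * n > k * (k - 1)"
  shows "De k n = Do k n \<and> even (D k n)"
proof -
  have bij: "bij_betw (phi k) (Idx k n n) (D_set k n)" using bij_phi[OF assms(1)] .
  have finI: "finite (Idx k n n)" unfolding Idx_def by (auto intro: finite_SigmaI)
  have fin: "finite (D_set k n)" using bij finI bij_betw_finite by blast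
  have "(\<Sum>M\<in>D_set k n. (-1::int) ^ big_parts M) = (\<Sum>x\<in>Idx k n n. (-1) ^ big_parts (phi k x))"
    using sum.reindex_bij_betw[OF bij, of "\<lambda>M. (-1::int) ^ big_parts M"] by simp
  also have "\<dots> = (\<Sum>x\<in>Idx k n n. (-1) ^ card (snd x))"
  proof (rule sum.cong)
    fix x assume "x \<in> Idx k n n"
    moreover obtain m T where x0: "x = (m, T)" by (cases x)
    ultimately have sub: "T \<subseteq> {m<..n}" unfolding Idx_def by auto
    then have "finite T" "\<forall>t\<in>T. m < t" using finite_subset by auto
    then show "(-1::int) ^ big_parts (phi k x) = (-1) ^ card (snd x)"
      using phi_props(6)[OF assms(1)] x0 by simp
  qed simp
  also have "\<dots> = coeff (FF k n) n" by (simp add: coeff_FF_Idx)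
  also have "\<dots> = 0" using coeff_FF_zero[OF assms(1) order.refl assms(2)] .
  finally have z: "(\<Sum>M\<in>D_set k n. (-1::int) ^ big_parts M) = 0" .
  let ?A = "{M \<in> D_set k n. even (big_parts M)}"
  let ?B = "{M \<in> D_set k n. odd (big_parts M)}"
  have un: "D_set k n = ?A \<union> ?B" by auto
  have dj: "?A \<inter> ?B = {}" by auto
  have fA: "finite ?A" "finite ?B" using fin by auto
  have "(\<Sum>M\<in>D_set k n. (-1::int) ^ big_parts M) = (\<Sum>M\<in>?A. (-1::int) ^ big_parts M) + (\<Sum>M\<in>?B. (-1::int) ^ big_parts M)"
    by (subst un, rule sum.union_disjoint[OF fA dj])
  also have "(\<Sum>M\<in>?A. (-1::int) ^ big_parts M) = (\<Sum>M\<in>?A. 1)" by (rule sum.cong) auto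
  also have "(\<Sum>M\<in>?B. (-1::int) ^ big_parts M) = (\<Sum>M\<in>?B. -1)" by (rule sum.cong) auto
  finally have "int (card ?A) - int (card ?B) = 0" using z by simp
  then have eq: "De k n = Do k n" unfolding De_def Do_def by simp
  have "D k n = De k n + Do k n" unfolding D_def De_def Do_def
    by (subst un, rule card_Un_disjoint[OF fA dj])
  with eq show ?thesis by simp
qed

end
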